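(* Let $G$ be a Lie group, $H\subseteq G$ a closed subgroup, and $\mathfrak{g}=\mathfrak{h}\oplus\mathfrak{m}$ a reductive decomposition. Equip $G/H$ with a $G$-invariant Riemannian metric (an $\mathrm{Ad}(H)$-invariant inner product $\langle\cdot,\cdot\rangle$ on $\mathfrak{m}$) with Levi-Civita connection $\nabla$. If $G/H$ admits a $G$-invariant essential Codazzi tensor field $A$, then the non-associative algebra $(\mathfrak{m},[\cdot,\cdot]_{\mathfrak{m}})$ is neither nilpotent nor split-solvable.
   Context: A reductive decomposition means $\mathfrak{m}$ is an $\mathrm{Ad}(H)$-invariant vector space complement of $\mathfrak{h}$ in $\mathfrak{g}$; $[X,Y]_{\mathfrak{m}}$ is the $\mathfrak{m}$-component of $[X,Y]$ in $\mathfrak{g}=\mathfrak{h}\oplus\mathfrak{m}$. $G$-invariant tensor fields on $G/H$ correspond to $\mathrm{Ad}(H)$-invariant tensors on $\mathfrak{m}\cong T_{eH}(G/H)$. A Codazzi tensor field is a symmetric twice-covariant tensor field $A$ with $(\nabla_XA)(Y,Z)=(\nabla_YA)(X,Z)$ for all vector fields $X,Y,Z$. A $G$-invariant Codazzi tensor field $A$ is called essential if $\nabla A\neq 0$ and none of the eigenspaces $\mathfrak{m}_i$ of $A$ on $\mathfrak{m}$ (relative to $\langle\cdot,\cdot\rangle$) is an ideal of $(\mathfrak{m},[\cdot,\cdot]_{\mathfrak{m}})$. A non-associative algebra $\mathfrak{a}$ is nilpotent if there is a positive integer $t$ such that every product of $t$ elements of $\mathfrak{a}$, however associated, is zero; it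 is split-solvable if there is a chain $\mathfrak{a}=\mathfrak{a}_0\supseteq\cdots\supseteq\mathfrak{a}_p=0$ of ideals of $\mathfrak{a}$ with $\dim(\mathfrak{a}_i/\mathfrak{a}_{i+1})=1$ for all $i$. *)

theory Defs
  imports "HOL-Analysis.Analysis"
begin

text \<open>Algebraic (infinitesimal) model of a reductive homogeneous Riemannian
space G/H.  The Lie algebra g is a finite-dimensional real vector space
(type 'g of class euclidean_space; its built-in inner product is NOT used),
br is the Lie bracket, h and m are the subspaces with g = h + m,
AdH is the set of linear maps Ad(h), h in H, and ip is the inner product on m.\<close>

definition lie_algebra :: "('g::real_vector \<Rightarrow> 'g \<Rightarrow> 'g) \<Rightarrow> bool" where
  "lie_algebra br \<longleftrightarrow> bilinear br \<and> (\<forall>x. br x x = 0) \<and>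
     (\<forall>x y z. br x (br y z) + br y (br z x) + br z (br x y) = 0)"

definition reductive_decomposition ::
  "('g::real_vector \<Rightarrow> 'g \<Rightarrow> 'g) \<Rightarrow> 'g set \<Rightarrow> 'g set \<Rightarrow> ('g \<Rightarrow> 'g) set \<Rightarrow> bool" where
  "reductive_decomposition br h m AdH \<longleftrightarrow>
     lie_algebra br \<and> subspace h \<and> subspace m \<and>
     (\<forall>x\<in>h. \<forall>y\<in>h. br x y \<in> h) \<and>
     h \<inter> m = {0} \<and> (\<forall>x. \<exists>a\<in>h. \<exists>b\<in>m. x = a + b) \<and>
     (\<forall>x\<in>h. \<forall>y\<in>m. br x y \<in> m) \<and>
     (\<forall>\<phi>\<in>AdH. linear \<phi> \<and> bij \<phi> \<and> (\<forall>x y. \<phi> (br x y) = br (\<phi> x) (\<phi> y)) \<and>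
        \<phi> ` h = h \<and> \<phi> ` m = m)"

definition mproj :: "'g::real_vector set \<Rightarrow> 'g set \<Rightarrow> 'g \<Rightarrow> 'g" where
  "mproj h m x = (THE y. y \<in> m \<and> x - y \<in> h)"

definition brm :: "('g::real_vector \<Rightarrow> 'g \<Rightarrow> 'g) \<Rightarrow> 'g set \<Rightarrow> 'g set \<Rightarrow> 'g \<Rightarrow> 'g \<Rightarrow> 'g" where
  "brm br h m x y = mproj h m (br x y)"

text \<open>Ad(H)-invariant inner product on m (hence also ad(h)-invariant).\<close>
definition invariant_inner_product ::
  "('g::real_vector \<Rightarrow> 'g \<Rightarrow> 'g) \<Rightarrow> 'g set \<Rightarrow> 'g set \<Rightarrow> ('g \<Rightarrow> 'g) set \<Rightarrow> ('g \<Rightarrow> 'g \<Rightarrow> real) \<Rightarrow> bool" where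
  "invariant_inner_product br h m AdH ip \<longleftrightarrow>
     bilinear ip \<and> (\<forall>x\<in>m. \<forall>y\<in>m. ip x y = ip y x) \<and> (\<forall>x\<in>m. x \<noteq> 0 \<longrightarrow> ip x x > 0) \<and>
     (\<forall>\<phi>\<in>AdH. \<forall>x\<in>m. \<forall>y\<in>m. ip (\<phi> x) (\<phi> y) = ip x y) \<and>
     (\<forall>z\<in>h. \<forall>x\<in>m. \<forall>y\<in>m. ip (br z x) y + ip x (br z y) = 0)"

text \<open>G-invariant symmetric 2-tensor field = Ad(H)-invariant symmetric bilinear form on m.\<close>
definition invariant_sym_form ::
  "('g::real_vector \<Rightarrow> 'g \<Rightarrow> 'g) \<Rightarrow> 'g set \<Rightarrow> 'g set \<Rightarrow> ('g \<Rightarrow> 'g) set \<Rightarrow> ('g \<Rightarrow> 'g \<Rightarrow> real) \<Rightarrow> bool" where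
  "invariant_sym_form br h m AdH A \<longleftrightarrow>
     bilinear A \<and> (\<forall>x\<in>m. \<forall>y\<in>m. A x y = A y x) \<and>
     (\<forall>\<phi>\<in>AdH. \<forall>x\<in>m. \<forall>y\<in>m. A (\<phi> x) (\<phi> y) = A x y) \<and>
     (\<forall>z\<in>h. \<forall>x\<in>m. \<forall>y\<in>m. A (br z x) y + A x (br z y) = 0)"

text \<open>Nomizu map of the Levi-Civita connection at the origin:
  Lambda(X)Y = 1/2 [X,Y]_m + U(X,Y), where
  2<U(X,Y),Z> = <[Z,X]_m,Y> + <X,[Z,Y]_m>.\<close>
definition lc_map ::
  "('g::real_vector \<Rightarrow> 'g \<Rightarrow> 'g) \<Rightarrow> 'g set \<Rightarrow> 'g set \<Rightarrow> ('g \<Rightarrow> 'g \<Rightarrow> real) \<Rightarrow> 'g \<Rightarrow> 'g \<Rightarrow> 'g" where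
  "lc_map br h m ip X Y = (THE W. W \<in> m \<and> (\<forall>Z\<in>m.
      2 * ip W Z = ip (brm br h m X Y) Z + ip (brm br h m Z X) Y + ip X (brm br h m Z Y)))"

text \<open>Covariant derivative of a G-invariant 2-tensor at the origin:
  (nabla_X A)(Y,Z) = - A(Lambda(X)Y, Z) - A(Y, Lambda(X)Z).\<close>
definition cov_deriv ::
  "('g::real_vector \<Rightarrow> 'g \<Rightarrow> 'g) \<Rightarrow> 'g set \<Rightarrow> 'g set \<Rightarrow> ('g \<Rightarrow> 'g \<Rightarrow> real) \<Rightarrow> ('g \<Rightarrow> 'g \<Rightarrow> real)
     \<Rightarrow> 'g \<Rightarrow> 'g \<Rightarrow> 'g \<Rightarrow> real" where
  "cov_deriv br h m ip A X Y Z = - A (lc_map br h m ip X Y) Z - A Y (lc_map br h m ip X Z)"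

definition codazzi ::
  "('g::real_vector \<Rightarrow> 'g \<Rightarrow> 'g) \<Rightarrow> 'g set \<Rightarrow> 'g set \<Rightarrow> ('g \<Rightarrow> 'g \<Rightarrow> real) \<Rightarrow> ('g \<Rightarrow> 'g \<Rightarrow> real) \<Rightarrow> bool" where
  "codazzi br h m ip A \<longleftrightarrow>
     (\<forall>X\<in>m. \<forall>Y\<in>m. \<forall>Z\<in>m. cov_deriv br h m ip A X Y Z = cov_deriv br h m ip A Y X Z)"

definition eigenspace_form :: "'g set \<Rightarrow> ('g \<Rightarrow> 'g \<Rightarrow> real) \<Rightarrow> ('g \<Rightarrow> 'g \<Rightarrow> real) \<Rightarrow> real \<Rightarrow> 'g set" where
  "eigenspace_form m ip A lam = {x \<in> m. \<forall>y\<in>m. A x y = lam * ip x y}"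

definition alg_ideal :: "'g::real_vector set \<Rightarrow> ('g \<Rightarrow> 'g \<Rightarrow> 'g) \<Rightarrow> 'g set \<Rightarrow> bool" where
  "alg_ideal m mul I \<longleftrightarrow> subspace I \<and> I \<subseteq> m \<and>
     (\<forall>x\<in>m. \<forall>y\<in>I. mul x y \<in> I \<and> mul y x \<in> I)"

definition essential_codazzi ::
  "('g::real_vector \<Rightarrow> 'g \<Rightarrow> 'g) \<Rightarrow> 'g set \<Rightarrow> 'g set \<Rightarrow> ('g \<Rightarrow> 'g) set \<Rightarrow> ('g \<Rightarrow> 'g \<Rightarrow> real)
     \<Rightarrow> ('g \<Rightarrow> 'g \<Rightarrow> real) \<Rightarrow> bool" where
  "essential_codazzi br h m AdH ip A \<longleftrightarrow>
     invariant_sym_form br h m AdH A \<and> codazzi br h m ip A \<and>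
     (\<exists>X\<in>m. \<exists>Y\<in>m. \<exists>Z\<in>m. cov_deriv br h m ip A X Y Z \<noteq> 0) \<and>
     (\<forall>lam. eigenspace_form m ip A lam \<noteq> {0} \<longrightarrow>
        \<not> alg_ideal m (brm br h m) (eigenspace_form m ip A lam))"

inductive alg_product :: "'g set \<Rightarrow> ('g \<Rightarrow> 'g \<Rightarrow> 'g) \<Rightarrow> nat \<Rightarrow> 'g \<Rightarrow> bool"
  for m mul where
  single: "x \<in> m \<Longrightarrow> alg_product m mul 1 x"
| mult: "alg_product m mul i x \<Longrightarrow> alg_product m mul j y \<Longrightarrow> alg_product m mul (i + j) (mul x y)"

definition alg_nilpotent :: "'g::zero set \<Rightarrow> ('g \<Rightarrow> 'g \<Rightarrow> 'g) \<Rightarrow> bool" where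
  "alg_nilpotent m mul \<longleftrightarrow> (\<exists>t>0. \<forall>x. alg_product m mul t x \<longrightarrow> x = 0)"

definition alg_split_solvable :: "'g::real_vector set \<Rightarrow> ('g \<Rightarrow> 'g \<Rightarrow> 'g) \<Rightarrow> bool" where
  "alg_split_solvable m mul \<longleftrightarrow> (\<exists>a::nat \<Rightarrow> 'g set. \<exists>p.
     a 0 = m \<and> a p = {0} \<and>
     (\<forall>i\<le>p. alg_ideal m mul (a i)) \<and>
     (\<forall>i<p. a (Suc i) \<subseteq> a i \<and> dim (a i) = dim (a (Suc i)) + 1))"

end

theory Submission imports Defs begin

locale czs =
  fixes br :: "'g::euclidean_space \<Rightarrow> 'g \<Rightarrow> 'g"
    and h m :: "'g set"
    and AdH :: "('g \<Rightarrow> 'g) set"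
    and ip A :: "'g \<Rightarrow> 'g \<Rightarrow> real"
  assumes RD: "reductive_decomposition br h m AdH"
    and IP: "invariant_inner_product br h m AdH ip"
    and AS: "invariant_sym_form br h m AdH A"
    and CZ: "codazzi br h m ip A"
begin

lemma RD': "lie_algebra br \<and> subspace h \<and> subspace m \<and> h \<inter> m = {0} \<and> (\<forall>x. \<exists>a\<in>h. \<exists>b\<in>m. x = a + b)"
  using RD unfolding reductive_decomposition_def by (elim conjE) (intro conjI; assumption)

lemma subm: "subspace m" and subh: "subspace h" and hm: "h \<inter> m = {0}"
  and dec: "\<And>x. \<exists>a\<in>h. \<exists>b\<in>m. x = a + b" and lie: "lie_algebra br"
  using RD' by auto

lemma bil_br: "bilinear br" using lie unfolding lie_algebra_def by (elim conjE)

lemma br_anti: "br x y = - br y x"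
proof -
  have "br (x+y) (x+y) = 0" "br x x = 0" "br y y = 0" using lie unfolding lie_algebra_def by (elim conjE; simp)+
  then show ?thesis using bil_br by (simp add: bilinear_ladd bilinear_radd eq_neg_iff_add_eq_0)
qed

lemma bil_ip: "bilinear ip" and ip_sym: "\<And>x y. x \<in> m \<Longrightarrow> y \<in> m \<Longrightarrow> ip x y = ip y x"
  and ip_pos: "\<And>x. x \<in> m \<Longrightarrow> x \<noteq> 0 \<Longrightarrow> ip x x > 0"
  using IP unfolding invariant_inner_product_def by (elim conjE; simp)+

lemma bil_A: "bilinear A" and A_sym: "\<And>x y. x \<in> m \<Longrightarrow> y \<in> m \<Longrightarrow> A x y = A y x"
  using AS unfolding invariant_sym_form_def by (elim conjE; simp)+

lemma mproj_unique: assumes "y \<in> m" "x - y \<in> h" shows "mproj h m x = y"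
proof -
  have u: "z = y" if "z \<in> m" "x - z \<in> h" for z
  proof -
    have "y - z \<in> m" using that assms subm by (simp add: subspace_diff)
    moreover have "(x - z) - (x - y) \<in> h" using subspace_diff[OF subh that(2) assms(2)] .
    then have "y - z \<in> h" by (simp add: algebra_simps)
    ultimately have "y - z \<in> h \<inter> m" by blast
    then have "y - z = 0" using hm by blast
    then show ?thesis by simp
  qed
  show ?thesis unfolding mproj_def
    apply (rule the_equality)
    using assms apply blast
    using u by blast
qed

lemma mproj_ex: "mproj h m x \<in> m \<and> x - mproj h m x \<in> h"
proof -
  obtain a b where "a \<in> h" "b \<in> m" "x = a + b" using dec by blast
  then have "mproj h m x = b" by (intro mproj_unique) auto
  then show ?thesis using \<open>a\<in>h\<close> \<open>b\<in>m\<close> \<open>x = a + b\<close> by simp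
qed

lemma mproj_m: "mproj h m x \<in> m" and mproj_h: "x - mproj h m x \<in> h"
  using mproj_ex by auto

lemma linear_mproj: "linear (mproj h m)"
proof (rule linearI)
  fix x y
  show "mproj h m (x + y) = mproj h m x + mproj h m y"
    apply (rule mproj_unique)
    using mproj_m mproj_h subm subh
     apply (simp add: subspace_add)
    using subspace_add[OF subh mproj_h[of x] mproj_h[of y]] by (simp add: algebra_simps)
next
  fix c and x :: 'g
  show "mproj h m (c *\<^sub>R x) = c *\<^sub>R mproj h m x"
    apply (rule mproj_unique)
    using mproj_m subm apply (simp add: subspace_scale)
    using subspace_scale[OF subh mproj_h[of x], of c] by (simp add: algebra_simps)
qed

abbreviation bm where "bm \<equiv> brm br h m"

lemma bm_m: "bm x y \<in> m" unfolding brm_def by (rule mproj_m)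

lemma bil_bm: "bilinear bm"
  unfolding bilinear_def brm_def
proof (intro conjI allI)
  fix x
  show "linear (\<lambda>y. mproj h m (br x y))"
    using linear_compose[of "br x" "mproj h m"] bil_br linear_mproj unfolding bilinear_def o_def by blast
next
  fix y
  show "linear (\<lambda>x. mproj h m (br x y))"
    using linear_compose[of "\<lambda>x. br x y" "mproj h m"] bil_br linear_mproj unfolding bilinear_def o_def by blast
qed

lemma bm_anti: "bm x y = - bm y x"
  unfolding brm_def using br_anti[of x y] linear_mproj by (simp add: linear_neg)

lemma ip_nondeg: assumes "q \<in> m" "\<And>z. z \<in> m \<Longrightarrow> ip q z = 0" shows "q = 0"
  using assms ip_pos[of q] by force


lemma lin_ip2: "linear (ip v)" using bil_ip unfolding bilinear_def by blast
lemma lin_ip1: "linear (\<lambda>x. ip x v)" using bil_ip unfolding bilinear_def by blast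
lemma lin_A2: "linear (A v)" using bil_A unfolding bilinear_def by blast
lemma lin_A1: "linear (\<lambda>x. A x v)" using bil_A unfolding bilinear_def by blast

lemma represent:
  assumes "linear f"
  shows "(\<Sum>b\<in>Basis. f b *\<^sub>R b) \<bullet> z = f (z::'g)"
proof -
  have "f z = f (\<Sum>b\<in>Basis. (z \<bullet> b) *\<^sub>R b)" by (simp add: euclidean_representation)
  also have "\<dots> = (\<Sum>b\<in>Basis. (z \<bullet> b) * f b)"
    using assms by (simp add: linear_sum linear_scale)
  finally have "f z = (\<Sum>b\<in>Basis. (z \<bullet> b) * f b)" .
  moreover have "(\<Sum>b\<in>Basis. f b *\<^sub>R b) \<bullet> z = (\<Sum>b\<in>Basis. f b * (b \<bullet> z))"
    by (simp add: inner_sum_left)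
  ultimately show ?thesis by (simp add: mult.commute inner_commute)
qed

lemma riesz:
  assumes V: "subspace V" "V \<subseteq> m" and f: "linear f"
  shows "\<exists>q\<in>V. \<forall>z\<in>V. ip q z = f z"
proof -
  define \<Phi> where "\<Phi> v = (\<Sum>b\<in>Basis. ip v b *\<^sub>R b)" for v
  have \<Phi>z: "\<Phi> v \<bullet> z = ip v z" for v z
    unfolding \<Phi>_def by (rule represent[OF lin_ip2])
  define r where "r = (\<Sum>b\<in>Basis. f b *\<^sub>R b)"
  have rz: "r \<bullet> z = f z" for z unfolding r_def by (rule represent[OF f])
  have lin\<Phi>: "linear \<Phi>"
  proof (rule linearI)
    fix x y show "\<Phi> (x + y) = \<Phi> x + \<Phi> y"
      unfolding \<Phi>_def by (simp add: bilinear_ladd[OF bil_ip] scaleR_add_left sum.distrib)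
  next
    fix c x show "\<Phi> (c *\<^sub>R x) = c *\<^sub>R \<Phi> x"
      unfolding \<Phi>_def by (simp add: bilinear_lmul[OF bil_ip] scaleR_sum_right)
  qed
  have inj0: "v = 0" if "v \<in> V" "\<Phi> v \<bullet> v = 0" for v
    using ip_nondeg that \<Phi>z V ip_pos by (metis less_irrefl subsetD)
  have injV: "inj_on \<Phi> (span V)"
  proof -
    have "inj_on \<Phi> V"
    proof (rule inj_onI)
      fix x y assume xy: "x \<in> V" "y \<in> V" "\<Phi> x = \<Phi> y"
      have "\<Phi> (x - y) = 0" using xy lin\<Phi> by (simp add: linear_diff)
      then have "x - y = 0" using inj0[of "x - y"] xy V by (simp add: subspace_diff)
      then show "x = y" by simp
    qed
    then show ?thesis using V(1) by (metis span_eq_iff)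
  qed
  define Ov where "Ov = {y. \<forall>x\<in>V. orthogonal x y}"
  have subOv: "subspace Ov" unfolding Ov_def subspace_def orthogonal_def
    by (simp add: inner_add_right)
  have dimO: "dim Ov + dim V = DIM('g)"
  proof -
    have "dim {y \<in> UNIV. \<forall>x\<in>V. orthogonal x y} + dim V = dim (UNIV::'g set)"
      by (rule dim_subspace_orthogonal_to_vectors) (use V in auto)
    then show ?thesis unfolding Ov_def by simp
  qed
  have dimPV: "dim (\<Phi> ` V) = dim V" by (rule dim_image_eq[OF lin\<Phi> injV])
  have subPV: "subspace (\<Phi> ` V)" using lin\<Phi> V(1) by (rule linear_subspace_image)
  have int0: "\<Phi> ` V \<inter> Ov = {0}"
  proof
    show "\<Phi> ` V \<inter> Ov \<subseteq> {0}"
    proof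
      fix y assume "y \<in> \<Phi> ` V \<inter> Ov"
      then obtain v where v: "v \<in> V" "y = \<Phi> v" "y \<in> Ov" by blast
      then have "\<Phi> v \<bullet> v = 0" unfolding Ov_def orthogonal_def by (simp add: inner_commute)
      then have "v = 0" using inj0 v by blast
      then show "y \<in> {0}" using v lin\<Phi> by (simp add: linear_0)
    qed
    show "{0} \<subseteq> \<Phi> ` V \<inter> Ov" using subOv subPV by (simp add: subspace_0)
  qed
  define SS where "SS = {x + y |x y. x \<in> \<Phi> ` V \<and> y \<in> Ov}"
  have "dim SS + dim (\<Phi> ` V \<inter> Ov) = dim (\<Phi> ` V) + dim Ov"
    unfolding SS_def by (rule dim_sums_Int[OF subPV subOv])
  then have "dim SS = DIM('g)" using int0 dimO dimPV by simp
  then have "span SS = UNIV" by (simp add: dim_eq_full)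
  moreover have "subspace SS" unfolding SS_def by (rule subspace_sums[OF subPV subOv])
  ultimately have "r \<in> SS" by (metis UNIV_I span_eq_iff)
  then obtain q w where qw: "q \<in> V" "w \<in> Ov" "r = \<Phi> q + w" unfolding SS_def by blast
  have "ip q z = f z" if "z \<in> V" for z
  proof -
    have "z \<bullet> w = 0" using qw(2) that unfolding Ov_def orthogonal_def by blast
    then have "w \<bullet> z = 0" by (simp only: inner_commute)
    then show ?thesis using rz[of z] qw(3) \<Phi>z[of q z] by (simp add: inner_add_left)
  qed
  then show ?thesis using qw(1) by blast
qed

lemmas ipS = bilinear_ladd[OF bil_ip] bilinear_radd[OF bil_ip] bilinear_lmul[OF bil_ip]
  bilinear_rmul[OF bil_ip] bilinear_lneg[OF bil_ip] bilinear_rneg[OF bil_ip]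
  bilinear_lsub[OF bil_ip] bilinear_rsub[OF bil_ip] bilinear_lzero[OF bil_ip] bilinear_rzero[OF bil_ip]
lemmas AS' = bilinear_ladd[OF bil_A] bilinear_radd[OF bil_A] bilinear_lmul[OF bil_A]
  bilinear_rmul[OF bil_A] bilinear_lneg[OF bil_A] bilinear_rneg[OF bil_A]
  bilinear_lsub[OF bil_A] bilinear_rsub[OF bil_A] bilinear_lzero[OF bil_A] bilinear_rzero[OF bil_A]
lemmas bmS = bilinear_ladd[OF bil_bm] bilinear_radd[OF bil_bm] bilinear_lmul[OF bil_bm]
  bilinear_rmul[OF bil_bm] bilinear_lneg[OF bil_bm] bilinear_rneg[OF bil_bm]
  bilinear_lsub[OF bil_bm] bilinear_rsub[OF bil_bm] bilinear_lzero[OF bil_bm] bilinear_rzero[OF bil_bm]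

abbreviation Lc where "Lc \<equiv> lc_map br h m ip"

definition rhs where "rhs X Y Z = ip (bm X Y) Z + ip (bm Z X) Y + ip X (bm Z Y)"

lemma lin_rhs: "linear (\<lambda>Z. rhs X Y Z / 2)"
  by (rule linearI) (simp_all add: rhs_def ipS bmS real_scaleR_def algebra_simps add_divide_distrib)

lemma lc_unique: assumes "W \<in> m" "\<And>Z. Z \<in> m \<Longrightarrow> 2 * ip W Z = rhs X Y Z"
  shows "Lc X Y = W"
proof -
  have u: "W' = W" if "W' \<in> m" "\<forall>Z\<in>m. 2 * ip W' Z = rhs X Y Z" for W'
  proof -
    have "ip (W' - W) Z = 0" if "Z \<in> m" for Z 
    proof -
      have "2 * ip W' Z = 2 * ip W Z" using that \<open>\<forall>Z\<in>m. _\<close> assms(2)[of Z] by simp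
      then show ?thesis by (simp add: ipS)
    qed
    moreover have "W' - W \<in> m" using subm that(1) assms(1) by (simp add: subspace_diff)
    ultimately have "W' - W = 0" using ip_nondeg by blast
    then show ?thesis by simp
  qed
  show ?thesis unfolding lc_map_def rhs_def[symmetric]
    apply (rule the_equality)
    using assms apply blast
    using u by blast
qed

lemma lc_char: "Lc X Y \<in> m \<and> (\<forall>Z\<in>m. 2 * ip (Lc X Y) Z = rhs X Y Z)"
proof -
  obtain q where q: "q \<in> m" "\<forall>Z\<in>m. ip q Z = rhs X Y Z / 2"
    using riesz[OF subm order_refl lin_rhs] by blast
  then have "Lc X Y = q" by (intro lc_unique) auto
  then show ?thesis using q by auto
qed

lemma lc_m: "Lc X Y \<in> m" and lc_eq: "Z \<in> m \<Longrightarrow> 2 * ip (Lc X Y) Z = rhs X Y Z"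
  using lc_char by auto

lemma lc_skew: assumes "X \<in> m" "Y \<in> m" "Z \<in> m"
  shows "ip (Lc X Y) Z + ip Y (Lc X Z) = 0"
proof -
  have "ip Y (Lc X Z) = ip (Lc X Z) Y" using ip_sym lc_m assms by blast
  moreover have "ip X (bm Y Z) = - ip X (bm Z Y)" "ip (bm Y X) Z = - ip (bm X Y) Z"
    "ip (bm Z X) Y = - ip (bm X Z) Y"
    by (subst bm_anti; simp add: ipS)+
  ultimately show ?thesis using lc_eq[of Z X Y] lc_eq[of Y X Z] assms unfolding rhs_def by simp
qed

lemma lc_tors: assumes "X \<in> m" "Y \<in> m"
  shows "Lc X Y - Lc Y X = bm X Y"
proof -
  have "ip (Lc X Y - Lc Y X - bm X Y) Z = 0" if "Z \<in> m" for Z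
  proof -
    have "ip X (bm Z Y) = ip (bm Z Y) X" "ip (bm Z X) Y = ip Y (bm Z X)"
      using ip_sym assms bm_m by blast+
    moreover have "ip (bm Y X) Z = - ip (bm X Y) Z"
      by (subst bm_anti; simp add: ipS)
    ultimately show ?thesis using lc_eq[of Z X Y] lc_eq[of Z Y X] that unfolding rhs_def
      by (simp add: ipS)
  qed
  moreover have "Lc X Y - Lc Y X - bm X Y \<in> m" using lc_m bm_m subm by (simp add: subspace_diff)
  ultimately have "Lc X Y - Lc Y X - bm X Y = 0" using ip_nondeg by blast
  then show ?thesis by simp
qed

lemma lc_add: "Lc (X + X') Y = Lc X Y + Lc X' Y"
  apply (rule lc_unique)
  using lc_m subm apply (simp add: subspace_add)
  using lc_eq unfolding rhs_def by (simp add: ipS bmS algebra_simps)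

lemma lc_scale: "Lc (c *\<^sub>R X) Y = c *\<^sub>R Lc X Y"
  apply (rule lc_unique)
  using lc_m subm apply (simp add: subspace_scale)
  using lc_eq unfolding rhs_def by (simp add: ipS bmS algebra_simps)

abbreviation cov where "cov \<equiv> cov_deriv br h m ip A"

lemma cov_add: "cov (X + X') Y Z = cov X Y Z + cov X' Y Z"
  unfolding cov_deriv_def by (simp add: lc_add AS')

lemma cov_scale: "cov (c *\<^sub>R X) Y Z = c * cov X Y Z"
  unfolding cov_deriv_def by (simp add: lc_scale AS' algebra_simps)

definition eig where "eig = {x\<in>m. \<exists>lam. \<forall>y\<in>m. A x y = lam * ip x y}"

lemma var_zero:
  fixes a b :: real
  assumes H: "\<And>t. 2 * t * a + t^2 * b \<le> 0"
  shows "a = 0"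
proof -
  define s where "s = \<bar>b\<bar> + 1"
  have s: "s > 0" unfolding s_def by simp
  have "2 * (a / s) * a + (a / s)^2 * b \<le> 0" by (rule H)
  then have "s^2 * (2 * (a / s) * a + (a / s)^2 * b) \<le> 0"
    by (simp add: mult_nonneg_nonpos)
  moreover have "s^2 * (2 * (a / s) * a + (a / s)^2 * b) = a^2 * (2 * s + b)"
    using s by (simp add: field_simps power2_eq_square)
  ultimately have "a^2 * (2 * s + b) \<le> 0" by simp
  moreover have "2 * s + b > 0"
  proof -
    have h1: "- b \<le> \<bar>b\<bar>" by (rule abs_ge_minus_self)
    have "2 * s + b = 2 + \<bar>b\<bar> + (\<bar>b\<bar> + b)" unfolding s_def by simp
    then show ?thesis using h1 abs_ge_zero[of b] by linarith
  qed
  ultimately have "a^2 \<le> 0" by (simp add: mult_le_0_iff)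
  then show ?thesis by simp
qed

lemma spectral: "m \<subseteq> span eig"
proof
  fix y assume ym: "y \<in> m"
  define E where "E = span eig"
  have subE: "subspace E" unfolding E_def by simp
  have Em: "E \<subseteq> m" unfolding E_def by (rule span_minimal) (auto simp: eig_def subm)
  have Aperp: "A e x = 0" if "e \<in> E" "x \<in> m" "\<forall>z\<in>E. ip x z = 0" for e x
  proof -
    have "e \<in> span eig" using that E_def by simp
    then show ?thesis
    proof (induct rule: span_induct)
      case base show ?case unfolding subspace_def by (simp add: AS')
    next
      case (step z)
      then obtain lam where "z \<in> m" "\<forall>y\<in>m. A z y = lam * ip z y" unfolding eig_def by blast
      moreover have "z \<in> E" using step E_def by (simp add: span_base)
      ultimately show ?case using that ip_sym by auto
    qed
  qed
  have decomp: "\<exists>e\<in>E. u - e \<in> m \<and> (\<forall>z\<in>E. ip (u - e) z = 0)" if "u \<in> m" for u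
  proof -
    obtain e where e: "e \<in> E" "\<forall>z\<in>E. ip e z = ip u z"
      using riesz[OF subE Em lin_ip2] by blast
    then have "u - e \<in> m" using that Em subm by (auto simp: subspace_diff)
    then show ?thesis using e by (auto simp: ipS)
  qed
  show "y \<in> span eig"
  proof (rule ccontr)
    assume yE: "y \<notin> span eig"
    define W where "W = {u\<in>m. \<forall>z\<in>E. ip u z = 0}"
    have subW: "subspace W" unfolding W_def subspace_def using subm
      by (auto simp: ipS subspace_add subspace_scale subspace_0)
    obtain e where e: "e \<in> E" "y - e \<in> m" "\<forall>z\<in>E. ip (y - e) z = 0" using decomp ym by blast
    define w where "w = y - e"
    have wW: "w \<in> W" using e unfolding W_def w_def by auto
    have wnz: "w \<noteq> 0" using e yE unfolding w_def E_def by auto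
    define K where "K = sphere (0::'g) 1 \<inter> W"
    have cK: "compact K" unfolding K_def by (rule compact_Int_closed) (auto intro: closed_subspace subW)
    have "w /\<^sub>R norm w \<in> K" unfolding K_def using wnz wW subW by (auto simp: subspace_scale)
    then have neK: "K \<noteq> {}" by blast
    have ipnz: "ip u u \<noteq> 0" if "u \<in> K" for u
      using that ip_pos unfolding K_def W_def by fastforce
    have cA: "continuous_on K (\<lambda>u. A u u)"
      by (rule bilinear_continuous_on_compose[OF continuous_on_id continuous_on_id bil_A])
    have cI: "continuous_on K (\<lambda>u. ip u u)"
      by (rule bilinear_continuous_on_compose[OF continuous_on_id continuous_on_id bil_ip])
    have cont: "continuous_on K (\<lambda>u. A u u / ip u u)"
      using continuous_on_divide[OF cA cI] ipnz by blast
    obtain x where xK: "x \<in> K" and xmax: "\<forall>u\<in>K. A u u / ip u u \<le> A x x / ip x x"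
      using continuous_attains_sup[OF cK neK cont] by blast
    define M where "M = A x x / ip x x"
    have xW: "x \<in> W" and xm: "x \<in> m" and xnz: "x \<noteq> 0" using xK unfolding K_def W_def by auto
    have ippos: "ip u u > 0" if "u \<in> W" "u \<noteq> 0" for u using that ip_pos unfolding W_def by auto
    have bound: "A u u \<le> M * ip u u" if "u \<in> W" for u
    proof (cases "u = 0")
      case True then show ?thesis by (simp add: ipS AS')
    next
      case False
      define c where "c = 1 / norm u"
      have c: "c \<noteq> 0" using False unfolding c_def by simp
      have "c *\<^sub>R u \<in> K" unfolding K_def c_def using False that subW by (auto simp: subspace_scale)
      then have "A (c *\<^sub>R u) (c *\<^sub>R u) / ip (c *\<^sub>R u) (c *\<^sub>R u) \<le> M" using xmax M_def by blast
      moreover have "A (c *\<^sub>R u) (c *\<^sub>R u) / ip (c *\<^sub>R u) (c *\<^sub>R u) = A u u / ip u u"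
        using c by (simp add: ipS AS')
      ultimately have "A u u / ip u u \<le> M" by simp
      then show ?thesis using ippos[OF that False] by (simp add: divide_le_eq)
    qed
    have xeq: "A x x = M * ip x x" unfolding M_def using ippos[OF xW xnz] by simp
    have var: "A x v = M * ip x v" if "v \<in> W" for v
    proof -
      have vm: "v \<in> m" using that W_def by auto
      have "2 * t * (A x v - M * ip x v) + t^2 * (A v v - M * ip v v) \<le> 0" for t
      proof -
        have "x + t *\<^sub>R v \<in> W" using xW that subW by (simp add: subspace_add subspace_scale)
        then have "A (x + t *\<^sub>R v) (x + t *\<^sub>R v) \<le> M * ip (x + t *\<^sub>R v) (x + t *\<^sub>R v)" by (rule bound)
        moreover have "A v x = A x v" "ip v x = ip x v" using A_sym ip_sym xm vm by auto
        ultimately show ?thesis using xeq by (simp add: ipS AS' algebra_simps power2_eq_square)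
      qed
      then have "A x v - M * ip x v = 0" by (rule var_zero)
      then show ?thesis by simp
    qed
    have "x \<in> eig"
    proof -
      have "A x y' = M * ip x y'" if y'm: "y' \<in> m" for y'
      proof -
        obtain e' where e': "e' \<in> E" "y' - e' \<in> m" "\<forall>z\<in>E. ip (y' - e') z = 0" using decomp y'm by blast
        have "y' - e' \<in> W" using e' W_def by auto
        then have "A x (y' - e') = M * ip x (y' - e')" by (rule var)
        moreover have "A x e' = 0"
        proof -
          have "A e' x = 0" using Aperp[OF e'(1) xm] xW W_def by auto
          then show ?thesis using A_sym xm e' Em by auto
        qed
        moreover have "ip x e' = 0" using xW W_def e' by auto
        ultimately show ?thesis by (simp add: AS' ipS)
      qed
      then show ?thesis unfolding eig_def using xm by blast
    qed
    then have "x \<in> E" unfolding E_def by (simp add: span_base)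
    then have "ip x x = 0" using xW W_def by auto
    then show False using ippos[OF xW xnz] by simp
  qed
qed

lemma codazzi_eq: "X \<in> m \<Longrightarrow> Y \<in> m \<Longrightarrow> Z \<in> m \<Longrightarrow> cov X Y Z = cov Y X Z"
  using CZ unfolding codazzi_def by blast

lemma key:
  assumes Xm: "X \<in> m" and eigX: "\<forall>u\<in>m. A X u = lam * ip X u" and Ym: "Y \<in> m" and Zm: "Z \<in> m"
  shows "(A (bm X Y) Z - lam * ip (bm X Y) Z) + (A Y (Lc X Z) - lam * ip Y (Lc X Z)) = 0"
proof -
  have c: "cov X Y Z = cov Y X Z" using codazzi_eq Xm Ym Zm by blast
  have e1: "A X (Lc Y Z) = lam * ip X (Lc Y Z)" using eigX lc_m by blast
  have s1: "ip (Lc Y X) Z + ip X (Lc Y Z) = 0" by (rule lc_skew[OF Ym Xm Zm])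
  have s2: "ip (Lc X Y) Z + ip Y (Lc X Z) = 0" by (rule lc_skew[OF Xm Ym Zm])
  have t: "Lc Y X = Lc X Y - bm X Y" using lc_tors[OF Xm Ym] by (simp add: algebra_simps)
  have H1: "lam * ip X (Lc Y Z) = A (bm X Y) Z + A Y (Lc X Z)"
    using c e1 unfolding cov_deriv_def t by (simp add: AS' algebra_simps)
  have H2: "ip X (Lc Y Z) = ip (bm X Y) Z + ip Y (Lc X Z)"
    using s1 s2 unfolding t by (simp add: ipS algebra_simps)
  then have "lam * ip X (Lc Y Z) = lam * ip (bm X Y) Z + lam * ip Y (Lc X Z)"
    by (simp add: distrib_left)
  then show ?thesis using H1 by linarith
qed

abbreviation Al where "Al lam u v \<equiv> A u v - lam * ip u v"

lemma chain_step:
  assumes Xm: "X \<in> m" and eigX: "\<forall>u\<in>m. A X u = lam * ip X u" and vm: "v \<in> m"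
    and yv: "bm X v = y + c *\<^sub>R v" and Qy: "\<forall>Z\<in>m. Al lam y (Lc X Z) = 0"
  shows "\<forall>Z\<in>m. Al lam v (Lc X Z) = 0"
proof -
  have linf: "linear (\<lambda>Z. Al lam v Z)"
    by (rule linearI) (simp_all add: AS' ipS algebra_simps)
  obtain p where pm: "p \<in> m" and pr: "\<forall>Z\<in>m. ip p Z = Al lam v Z"
    using riesz[OF subm order_refl linf] by blast
  define q where "q = Lc X p"
  have qm: "q \<in> m" unfolding q_def by (rule lc_m)
  have qZ: "ip q Z = Al lam (bm X v) Z" if Zm: "Z \<in> m" for Z
  proof -
    have "ip q Z = - ip p (Lc X Z)" using lc_skew[OF Xm pm Zm] unfolding q_def by simp
    also have "\<dots> = - Al lam v (Lc X Z)" using pr lc_m by simp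
    also have "\<dots> = Al lam (bm X v) Z" using key[OF Xm eigX vm Zm] by simp
    finally show ?thesis .
  qed
  have "ip q q = Al lam y q + c * Al lam v q"
    using qZ[OF qm] unfolding yv by (simp add: AS' ipS algebra_simps)
  moreover have "Al lam y q = 0" using Qy pm unfolding q_def by blast
  moreover have "Al lam v q = 0"
  proof -
    have "ip (Lc X p) p + ip p (Lc X p) = 0" by (rule lc_skew[OF Xm pm pm])
    moreover have "ip (Lc X p) p = ip p (Lc X p)" using ip_sym lc_m pm by blast
    ultimately have "ip p q = 0" unfolding q_def by simp
    then show ?thesis using pr qm by simp
  qed
  ultimately have "ip q q = 0" by simp
  then have q0: "q = 0" using ip_pos qm by fastforce
  show ?thesis
  proof
    fix Z assume Zm: "Z \<in> m"
    have "Al lam v (Lc X Z) = - Al lam (bm X v) Z" using key[OF Xm eigX vm Zm] by simp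
    also have "\<dots> = - ip q Z" using qZ[OF Zm] by simp
    also have "\<dots> = 0" using q0 by (simp add: ipS)
    finally show "Al lam v (Lc X Z) = 0" .
  qed
qed

lemma chain_all:
  assumes Xm: "X \<in> m" and eigX: "\<forall>u\<in>m. A X u = lam * ip X u"
    and a0: "m \<subseteq> a 0" and ap: "a p \<subseteq> {0}" and am: "\<forall>i<p. a i \<subseteq> m"
    and st: "\<forall>i<p. \<forall>v\<in>a i. \<exists>c. bm X v - c *\<^sub>R v \<in> a (Suc i)"
  shows "\<forall>Y\<in>m. \<forall>Z\<in>m. Al lam Y (Lc X Z) = 0"
proof -
  have "\<forall>Y\<in>a (p - k). \<forall>Z\<in>m. Al lam Y (Lc X Z) = 0" if "k \<le> p" for k
    using that
  proof (induct k)
    case 0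
    then show ?case using ap by (auto simp: AS' ipS)
  next
    case (Suc k)
    define i where "i = p - Suc k"
    have ip': "i < p" "Suc i = p - k" using Suc.prems unfolding i_def by auto
    have IH: "\<forall>Y\<in>a (Suc i). \<forall>Z\<in>m. Al lam Y (Lc X Z) = 0" using Suc ip' by simp
    have "\<forall>Z\<in>m. Al lam v (Lc X Z) = 0" if vi: "v \<in> a i" for v
    proof -
      obtain c where c: "bm X v - c *\<^sub>R v \<in> a (Suc i)" using st ip' vi by blast
      have vm: "v \<in> m" using am ip' vi by blast
      show ?thesis
        by (rule chain_step[OF Xm eigX vm, of "bm X v - c *\<^sub>R v" c]) (use IH c in auto)
    qed
    then show ?case unfolding i_def by blast
  qed
  from this[of p] show ?thesis using a0 by auto
qed

lemma eig_cov:
  assumes Xm: "X \<in> m" and eigX: "\<forall>u\<in>m. A X u = lam * ip X u"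
    and Q: "\<forall>Y\<in>m. \<forall>Z\<in>m. Al lam Y (Lc X Z) = 0"
    and Ym: "Y \<in> m" and Zm: "Z \<in> m"
  shows "cov X Y Z = 0"
proof -
  have "Al lam Z (Lc X Y) = 0" "Al lam Y (Lc X Z) = 0" using Q Ym Zm by auto
  moreover have "A (Lc X Y) Z = A Z (Lc X Y)" "ip (Lc X Y) Z = ip Z (Lc X Y)"
    using A_sym ip_sym lc_m Zm by auto
  moreover have "ip (Lc X Y) Z + ip Y (Lc X Z) = 0" by (rule lc_skew[OF Xm Ym Zm])
  ultimately have "A (Lc X Y) Z = lam * ip Z (Lc X Y)" "A Y (Lc X Z) = lam * ip Y (Lc X Z)"
    "ip Z (Lc X Y) = - ip Y (Lc X Z)" by (simp_all add: algebra_simps)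
  then have "A (Lc X Y) Z = - (A Y (Lc X Z))" by simp
  then show ?thesis unfolding cov_deriv_def by simp
qed

lemma cov_zero:
  assumes H: "\<And>X. X \<in> m \<Longrightarrow> \<exists>a p. m \<subseteq> a 0 \<and> a p \<subseteq> {0} \<and> (\<forall>i<p. a i \<subseteq> m) \<and>
      (\<forall>i<p. \<forall>v\<in>a i. \<exists>c. bm X v - c *\<^sub>R v \<in> a (Suc i))"
  shows "\<forall>X\<in>m. \<forall>Y\<in>m. \<forall>Z\<in>m. cov X Y Z = 0"
proof
  fix X assume "X \<in> m"
  then have "X \<in> span eig" using spectral by blast
  then show "\<forall>Y\<in>m. \<forall>Z\<in>m. cov X Y Z = 0"
  proof (induct rule: span_induct)
    case base
    show ?case unfolding subspace_def
    proof (intro conjI ballI allI; simp?)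
      show "\<forall>Y\<in>m. \<forall>Z\<in>m. cov 0 Y Z = 0" using cov_scale[of 0] by simp
    next
      fix x y assume "\<forall>Y\<in>m. \<forall>Z\<in>m. cov x Y Z = 0" "\<forall>Y\<in>m. \<forall>Z\<in>m. cov y Y Z = 0"
      then show "\<forall>Y\<in>m. \<forall>Z\<in>m. cov (x + y) Y Z = 0" by (simp add: cov_add)
    next
      fix c x assume "\<forall>Y\<in>m. \<forall>Z\<in>m. cov x Y Z = 0"
      then show "\<forall>Y\<in>m. \<forall>Z\<in>m. cov (c *\<^sub>R x) Y Z = 0" by (simp add: cov_scale)
    qed
  next
    case (step X)
    then obtain lam where Xm: "X \<in> m" and eX: "\<forall>u\<in>m. A X u = lam * ip X u" unfolding eig_def by blast
    obtain a p where ch: "m \<subseteq> a 0" "a p \<subseteq> {0}" "\<forall>i<p. a i \<subseteq> m"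
      "\<forall>i<p. \<forall>v\<in>a i. \<exists>c. bm X v - c *\<^sub>R v \<in> a (Suc i)" using H[OF Xm] by blast
    have Q: "\<forall>Y\<in>m. \<forall>Z\<in>m. Al lam Y (Lc X Z) = 0" by (rule chain_all[OF Xm eX ch])
    show ?case using eig_cov[OF Xm eX Q] by blast
  qed
qed

lemma prod_m: "alg_product m bm n x \<Longrightarrow> x \<in> m"
  by (induct rule: alg_product.induct) (auto simp: bm_m)

lemma nilp_chain:
  assumes "alg_nilpotent m bm" and Xm: "X \<in> m"
  shows "\<exists>a p. m \<subseteq> a 0 \<and> a p \<subseteq> {0} \<and> (\<forall>i<p. a i \<subseteq> m) \<and>
      (\<forall>i<p. \<forall>v\<in>a i. \<exists>c. bm X v - c *\<^sub>R v \<in> a (Suc i))"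
proof -
  obtain t where t: "t > 0" "\<forall>x. alg_product m bm t x \<longrightarrow> x = 0"
    using assms unfolding alg_nilpotent_def by blast
  define a where "a i = span {x. alg_product m bm (Suc i) x}" for i
  have A1: "m \<subseteq> a 0" unfolding a_def
  proof
    fix x assume "x \<in> m"
    then have "alg_product m bm 1 x" by (rule alg_product.single)
    then show "x \<in> span {x. alg_product m bm (Suc 0) x}" by (simp add: span_base)
  qed
  have A2: "a (t - 1) \<subseteq> {0}"
  proof -
    have "Suc (t - 1) = t" using t(1) by simp
    then have "{x. alg_product m bm (Suc (t - 1)) x} \<subseteq> {0}" using t(2) by auto
    then have "a (t - 1) \<subseteq> span {0}" unfolding a_def by (rule span_mono)
    then show ?thesis by simp
  qed
  have A3: "a i \<subseteq> m" for i
    unfolding a_def by (rule span_minimal[OF _ subm]) (use prod_m in blast)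
  have A4: "\<exists>c. bm X v - c *\<^sub>R v \<in> a (Suc i)" if "v \<in> a i" for i v
  proof -
    have lin: "linear (bm X)" using bil_bm unfolding bilinear_def by blast
    have "bm X ` {x. alg_product m bm (Suc i) x} \<subseteq> {x. alg_product m bm (Suc (Suc i)) x}"
    proof
      fix z assume "z \<in> bm X ` {x. alg_product m bm (Suc i) x}"
      then obtain x where x: "alg_product m bm (Suc i) x" "z = bm X x" by blast
      have "alg_product m bm (1 + Suc i) (bm X x)"
        by (rule alg_product.mult[OF alg_product.single[OF Xm] x(1)])
      then show "z \<in> {x. alg_product m bm (Suc (Suc i)) x}" using x by simp
    qed
    then have "span (bm X ` {x. alg_product m bm (Suc i) x}) \<subseteq> a (Suc i)"
      unfolding a_def by (rule span_mono)
    moreover have "bm X v \<in> span (bm X ` {x. alg_product m bm (Suc i) x})"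
      using that unfolding a_def by (simp add: span_linear_image[OF lin])
    ultimately have "bm X v - 0 *\<^sub>R v \<in> a (Suc i)" by auto
    then show ?thesis by blast
  qed
  show ?thesis
    apply (rule exI[of _ a], rule exI[of _ "t - 1"])
    using A1 A2 A3 A4 by simp
qed

lemma codim1:
  fixes S T :: "'g set"
  assumes "subspace S" "subspace T" "T \<subseteq> S" "dim S = dim T + 1"
  shows "\<exists>v0\<in>S. \<forall>v\<in>S. \<exists>k. v - k *\<^sub>R v0 \<in> T"
proof -
  have "S \<noteq> T" using assms(4) by auto
  then obtain v0 where v0: "v0 \<in> S" "v0 \<notin> T" using assms(3) by blast
  have spT: "span T = T" using assms(2) by (simp add: span_eq_iff)
  define B where "B = span (insert v0 T)"
  have "v0 \<notin> span T" by (metis spT v0(2))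
  then have "dim B = dim T + 1" unfolding B_def dim_span by (simp add: dim_insert)
  moreover have "B \<subseteq> S" unfolding B_def using v0 assms by (intro span_minimal) auto
  ultimately have "B = S" using assms by (intro subspace_dim_equal) (auto simp: B_def)
  then have "\<forall>v\<in>S. \<exists>k. v - k *\<^sub>R v0 \<in> T" unfolding B_def span_insert using spT by auto
  then show ?thesis using v0 by blast
qed

lemma solv_chain:
  assumes "alg_split_solvable m bm" and Xm: "X \<in> m"
  shows "\<exists>a p. m \<subseteq> a 0 \<and> a p \<subseteq> {0} \<and> (\<forall>i<p. a i \<subseteq> m) \<and>
      (\<forall>i<p. \<forall>v\<in>a i. \<exists>c. bm X v - c *\<^sub>R v \<in> a (Suc i))"
proof -
  obtain a p where a: "a 0 = m" "a p = {0}" "\<forall>i\<le>p. alg_ideal m bm (a i)"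
    "\<forall>i<p. a (Suc i) \<subseteq> a i \<and> dim (a i) = dim (a (Suc i)) + 1"
    using assms unfolding alg_split_solvable_def by blast
  have id: "subspace (a i) \<and> a i \<subseteq> m \<and> (\<forall>x\<in>m. \<forall>y\<in>a i. bm x y \<in> a i)" if "i \<le> p" for i
    using a(3) that unfolding alg_ideal_def by blast
  have "\<exists>c. bm X v - c *\<^sub>R v \<in> a (Suc i)" if ip: "i < p" and v: "v \<in> a i" for i v
  proof -
    have Si: "subspace (a i)" "a i \<subseteq> m" "\<forall>x\<in>m. \<forall>y\<in>a i. bm x y \<in> a i" using id ip by auto
    have Ss: "subspace (a (Suc i))" "\<forall>x\<in>m. \<forall>y\<in>a (Suc i). bm x y \<in> a (Suc i)" using id ip by auto
    obtain v0 where v0: "v0 \<in> a i" "\<forall>v\<in>a i. \<exists>k. v - k *\<^sub>R v0 \<in> a (Suc i)"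
      using codim1[OF Si(1) Ss(1)] a(4) ip by blast
    have "bm X v0 \<in> a i" using Si Xm v0 by blast
    then obtain c where c: "bm X v0 - c *\<^sub>R v0 \<in> a (Suc i)" using v0 by blast
    obtain k where k: "v - k *\<^sub>R v0 \<in> a (Suc i)" using v0 v by blast
    define y where "y = v - k *\<^sub>R v0"
    define y1 where "y1 = bm X v0 - c *\<^sub>R v0"
    have eq: "bm X v - c *\<^sub>R v = k *\<^sub>R y1 + (bm X y - c *\<^sub>R y)"
      unfolding y_def y1_def by (simp add: bmS algebra_simps)
    have "bm X y \<in> a (Suc i)" using Ss(2) Xm k y_def by blast
    moreover have "y1 \<in> a (Suc i)" using c y1_def by simp
    moreover have "y \<in> a (Suc i)" using k y_def by simp
    ultimately have "k *\<^sub>R y1 + (bm X y - c *\<^sub>R y) \<in> a (Suc i)"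
      using Ss(1) by (simp add: subspace_add subspace_diff subspace_scale)
    then show ?thesis using eq by metis
  qed
  moreover have "\<forall>i<p. a i \<subseteq> m" using id by auto
  ultimately show ?thesis using a(1,2) by blast
qed

end

theorem proposition2p3:
  fixes br :: "'g::euclidean_space \<Rightarrow> 'g \<Rightarrow> 'g"
    and h m :: "'g set"
    and AdH :: "('g \<Rightarrow> 'g) set"
    and ip A :: "'g \<Rightarrow> 'g \<Rightarrow> real"
  assumes "reductive_decomposition br h m AdH"
    and "invariant_inner_product br h m AdH ip"
    and "essential_codazzi br h m AdH ip A"
  shows "\<not> alg_nilpotent m (brm br h m) \<and> \<not> alg_split_solvable m (brm br h m)"
proof -
  have E: "invariant_sym_form br h m AdH A" "codazzi br h m ip A"
    "\<exists>X\<in>m. \<exists>Y\<in>m. \<exists>Z\<in>m. cov_deriv br h m ip A X Y Z \<noteq> 0"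
  proof -
    have E0: "invariant_sym_form br h m AdH A \<and> codazzi br h m ip A \<and>
      (\<exists>X\<in>m. \<exists>Y\<in>m. \<exists>Z\<in>m. cov_deriv br h m ip A X Y Z \<noteq> 0)"
      using assms(3) unfolding essential_codazzi_def by (elim conjE) (intro conjI; assumption)
    then show "invariant_sym_form br h m AdH A" by (elim conjE)
    show "codazzi br h m ip A" using E0 by (elim conjE)
    show "\<exists>X\<in>m. \<exists>Y\<in>m. \<exists>Z\<in>m. cov_deriv br h m ip A X Y Z \<noteq> 0" using E0 by (elim conjE)
  qed
  interpret czs br h m AdH ip A using assms(1,2) E(1,2) by unfold_locales
  obtain X Y Z where XYZ: "X \<in> m" "Y \<in> m" "Z \<in> m" "cov_deriv br h m ip A X Y Z \<noteq> 0"
    using E(3) by blast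
  show ?thesis
  proof
    show "\<not> alg_nilpotent m (brm br h m)"
    proof
      assume "alg_nilpotent m (brm br h m)"
      then have "\<forall>X\<in>m. \<forall>Y\<in>m. \<forall>Z\<in>m. cov_deriv br h m ip A X Y Z = 0"
        by (rule cov_zero[OF nilp_chain])
      then show False using XYZ by blast
    qed
    show "\<not> alg_split_solvable m (brm br h m)"
    proof
      assume "alg_split_solvable m (brm br h m)"
      then have "\<forall>X\<in>m. \<forall>Y\<in>m. \<forall>Z\<in>m. cov_deriv br h m ip A X Y Z = 0"
        by (rule cov_zero[OF solv_chain])
      then show False using XYZ by blast
    qed
  qed
qed

end
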